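(* Let $n\ge 2$ and let $L = sl(n,\mathbb{C}) = \{X\in\mathbb{C}^{n\times n} \mid \operatorname{tr} X = 0\}$. Let $g$ be an inner automorphism of $L$ of order $2$, i.e. $g(X) = AXA^{-1}$ for some $A\in SL(n,\mathbb{C})$, with $g\neq \mathrm{Id}$ and $g^2=\mathrm{Id}$, and let $L = L_0 \oplus L_1$ be the associated $\mathbb{Z}_2$-grading, where $L_0 = \{X : g(X)=X\}$ and $L_1=\{X: g(X) = -X\}$. Then every finite-dimensional irreducible representation $r: L\to \operatorname{End} V$ is compatible with this $\mathbb{Z}_2$-grading, i.e. there exists a decomposition $V = V_0\oplus V_1$ into subspaces such that $r(X_i)V_j\subseteq V_{i+j}$ for all $i,j\in\mathbb{Z}_2$ and all $X_i\in L_i$.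
   Context: For a Lie algebra $L$ with a $G$-grading $L=\bigoplus_{i\in G}L_i$ ($G$ an abelian group, $[L_i,L_j]\subseteq L_{i+j}$), a representation $r:L\to\operatorname{End}V$ is called compatible with the $G$-grading if there is a direct sum decomposition $V=\bigoplus_{i\in G}V_i$ with $r(X_i)V_j\subseteq V_{i+j}$ for all $i,j\in G$ and all $X_i\in L_i$. *)

theory Defs
  imports "HOL-Analysis.Analysis"
begin

definition mscale :: "complex \<Rightarrow> complex^'n^'m \<Rightarrow> complex^'n^'m" where
  "mscale c X = (\<chi> i j. c * X $ i $ j)"

definition mbracket :: "complex^'n^'n \<Rightarrow> complex^'n^'n \<Rightarrow> complex^'n^'n" where
  "mbracket X Y = X ** Y - Y ** X"

definition sl :: "(complex^'n^'n) set" where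
  "sl = {X. trace X = 0}"

definition csubspace :: "(complex^'m) set \<Rightarrow> bool" where
  "csubspace W \<longleftrightarrow> 0 \<in> W \<and> (\<forall>x\<in>W. \<forall>y\<in>W. x + y \<in> W) \<and> (\<forall>c. \<forall>x\<in>W. c *s x \<in> W)"

text \<open>A representation of sl(n,C) on V = complex^'m, with End V identified with
  complex m x m matrices: complex-linear and bracket-preserving on sl(n,C).\<close>
definition is_rep :: "(complex^'n^'n \<Rightarrow> complex^'m^'m) \<Rightarrow> bool" where
  "is_rep r \<longleftrightarrow>
     (\<forall>X\<in>sl. \<forall>Y\<in>sl. r (X + Y) = r X + r Y) \<and>
     (\<forall>c. \<forall>X\<in>sl. r (mscale c X) = mscale c (r X)) \<and>
     (\<forall>X\<in>sl. \<forall>Y\<in>sl. r (mbracket X Y) = mbracket (r X) (r Y))"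

text \<open>Irreducible: V is nonzero (automatic, types are nonempty) and the only
  complex subspaces invariant under all r X, X in sl, are 0 and V.\<close>
definition irreducible_rep :: "(complex^'n^'n \<Rightarrow> complex^'m^'m) \<Rightarrow> bool" where
  "irreducible_rep r \<longleftrightarrow> is_rep r \<and>
     (\<forall>W. csubspace W \<and> (\<forall>X\<in>sl. \<forall>v\<in>W. r X *v v \<in> W) \<longrightarrow> W = {0} \<or> W = UNIV)"

end

theory Submission
  imports Defs "HOL-Computational_Algebra.Fundamental_Theorem_Algebra"
begin



lemma mm_add_r: "((A::complex^'m^'m) + B) ** C = A ** C + B ** C"
  by (simp add: matrix_matrix_mult_def vec_eq_iff sum.distrib algebra_simps)
lemma mm_diff_r: "((A::complex^'m^'m) - B) ** C = A ** C - B ** C"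
  by (simp add: matrix_matrix_mult_def vec_eq_iff sum_subtractf algebra_simps)
lemma mm_diff_l: "(A::complex^'m^'m) ** (B - C) = A ** B - A ** C"
  by (simp add: matrix_matrix_mult_def vec_eq_iff sum_subtractf algebra_simps)
lemma mm_neg_l: "(- (A::complex^'m^'m)) ** B = - (A ** B)"
  by (simp add: matrix_matrix_mult_def vec_eq_iff sum_negf)
lemma mm_neg_r: "(A::complex^'m^'m) ** (- B) = - (A ** B)"
  by (simp add: matrix_matrix_mult_def vec_eq_iff sum_negf)
lemma sum_delta_mult: "(\<Sum>k\<in>UNIV. (if (i::'m::finite) = k then c else 0) * (f k::complex)) = c * f i"
proof -
  have "(\<Sum>k\<in>UNIV. (if i = k then c else 0) * f k) = (\<Sum>k\<in>UNIV. if i = k then c * f k else 0)"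
    by (rule sum.cong) auto
  then show ?thesis by simp
qed
lemma sum_delta_mult2: "(\<Sum>k\<in>UNIV. (f k::complex) * (if k = (j::'m::finite) then c else 0)) = f j * c"
proof -
  have "(\<Sum>k\<in>UNIV. f k * (if k = j then c else 0)) = (\<Sum>k\<in>UNIV. if j = k then f k * c else 0)"
    by (rule sum.cong) auto
  then show ?thesis by simp
qed
lemma mat_mult_l: "mat c ** (A::complex^'m^'m) = (\<chi> i j. c * A$i$j)"
  by (simp add: matrix_matrix_mult_def vec_eq_iff mat_def sum_delta_mult)
lemma mat_mult_r: "(A::complex^'m^'m) ** mat c = (\<chi> i j. c * A$i$j)"
  by (simp add: matrix_matrix_mult_def vec_eq_iff mat_def sum_delta_mult2 mult.commute)
lemma mat_comm: "mat c ** (A::complex^'m^'m) = A ** mat c"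
  by (simp add: mat_mult_l mat_mult_r)
lemma mat_add: "mat a + mat b = (mat (a + b) :: complex^'m^'m)"
  by (simp add: mat_def vec_eq_iff)
lemma mat_diff: "mat a - mat b = (mat (a - b) :: complex^'m^'m)"
  by (simp add: mat_def vec_eq_iff)
lemma mat_neg: "- mat a = (mat (- a) :: complex^'m^'m)"
  by (simp add: mat_def vec_eq_iff)
lemma mat_mm: "mat a ** mat b = (mat (a * b) :: complex^'m^'m)"
  by (simp add: mat_mult_l) (simp add: mat_def vec_eq_iff)
lemma mat_mv: "mat c *v (v::complex^'m) = c *s v"
  by (simp add: matrix_vector_mult_def vec_eq_iff mat_def sum_delta_mult)
lemma mat_comm2: "(M::complex^'m^'m) ** (mat c ** X) = mat c ** (M ** X)"
  by (metis mat_comm matrix_mul_assoc)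
lemma mscale_eq: "mscale c (X::complex^'m^'m) = mat c ** X"
  by (simp add: mscale_def mat_mult_l)
lemma mv_scale: "(A::complex^'m^'m) *v (c *s v) = c *s (A *v v)"
  by (simp add: matrix_vector_mult_def vec_eq_iff sum_distrib_left algebra_simps)
lemma mv_sum: "(A::complex^'m^'m) *v (sum f S) = sum (\<lambda>i. A *v f i) S"
  by (induction S rule: infinite_finite_induct) (auto simp: matrix_vector_right_distrib)
lemma smult_sum: "(c::complex) *s (sum f S) = sum (\<lambda>i. c *s f i) S"
  by (induction S rule: infinite_finite_induct) (auto simp: vector_add_ldistrib)

primrec mp :: "complex^'m^'m \<Rightarrow> nat \<Rightarrow> complex^'m^'m" where
  "mp N 0 = mat 1" | "mp N (Suc k) = N ** mp N k"

lemma mp_comm: "A ** B = B ** A \<Longrightarrow> mp A k ** B = B ** mp A k"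
  by (induction k) (simp_all, metis matrix_mul_assoc)

definition pm :: "complex^'m^'m \<Rightarrow> complex poly \<Rightarrow> complex^'m^'m" where
  "pm M p = fold_coeffs (\<lambda>a B. mat a + M ** B) p 0"

lemma pm_0[simp]: "pm M 0 = 0" by (simp add: pm_def)
lemma pm_pCons: "pm M (pCons a p) = mat a + M ** pm M p"
  by (cases "p = 0 \<and> a = 0") (auto simp: pm_def)

lemma pm_add: "pm M (p + q) = pm M p + pm M q"
proof (induction p q rule: poly_induct2)
  case 0 then show ?case by simp
next
  case (pCons a p b q)
  then show ?case by (simp add: pm_pCons matrix_add_ldistrib mat_add[symmetric] add_ac)
qed

lemma pm_smult: "pm M (smult c p) = mat c ** pm M p"
proof (induction p)
  case 0 then show ?case by simp
next
  case (pCons a p)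
  then show ?case
    by (simp add: pm_pCons matrix_add_ldistrib mat_mm mat_comm2)
qed

lemma pm_diff: "pm M (p - q) = pm M p - pm M q"
  using pm_add[of M "p - q" q] by (simp add: algebra_simps)
lemma pm_lin: "pm M ([:- z, 1:] * q) = (M - mat z) ** pm M q"
  by (simp add: pm_diff pm_smult pm_pCons mm_diff_r)

lemma pm_monom: "pm M (monom c k) = mat c ** mp M k"
proof (induction k)
  case 0 then show ?case by (simp add: monom_0 pm_pCons)
next
  case (Suc k)
  then show ?case by (simp add: monom_Suc pm_pCons mat_comm2)
qed

lemma pm_sum: "pm M (sum f S) = sum (\<lambda>i. pm M (f i)) S"
  by (induction S rule: infinite_finite_induct) (auto simp: pm_add)



lemma sum_mv: "(sum f S) *v (v::complex^'m) = sum (\<lambda>i. f i *v v) S"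
  by (induction S rule: infinite_finite_induct) (auto simp: matrix_vector_mult_add_rdistrib)

lemma smult_zero_vec: "(c::complex) \<noteq> 0 \<Longrightarrow> c *s (v::complex^'m) = 0 \<Longrightarrow> v = 0"
  by (simp add: vec_eq_iff)

lemma root_descent:
  fixes M :: "complex^'m^'m"
  shows "p \<noteq> 0 \<Longrightarrow> pm M p *v v = 0 \<Longrightarrow> v \<noteq> 0 \<Longrightarrow> \<exists>\<mu> w. w \<noteq> 0 \<and> (M - mat \<mu>) *v w = 0"
proof (induction "degree p" arbitrary: p rule: less_induct)
  case less
  show ?case
  proof (cases "degree p = 0")
    case True
    then obtain c where pc: "p = [:c:]" by (metis degree_eq_zeroE)
    with less.prems have "c \<noteq> 0" by simp
    have "pm M p = mat c" by (simp add: pc pm_pCons)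
    with less.prems have "c *s v = 0" by (simp add: mat_mv)
    with \<open>c \<noteq> 0\<close> less.prems show ?thesis using smult_zero_vec by blast
  next
    case False
    then have "\<not> constant (poly p)" by (simp add: constant_degree)
    then obtain z where "poly p z = 0" using fundamental_theorem_of_algebra by blast
    then obtain q where pq: "p = [:-z, 1:] * q" using poly_eq_0_iff_dvd by (metis dvdE)
    with less.prems have q0: "q \<noteq> 0" by auto
    have "degree ([:-z,1:] * q) = degree [:-z,1:] + degree q" by (rule degree_mult_eq) (use q0 in auto)
    then have "degree p = 1 + degree q" using pq by simp
    then have dq: "degree q < degree p" by simp
    have eq: "pm M p *v v = (M - mat z) *v (pm M q *v v)"
      using pm_lin[of M z q] by (simp add: pq matrix_vector_mul_assoc del: mult_pCons_left)
    show ?thesis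
    proof (cases "pm M q *v v = 0")
      case True
      then show ?thesis using less.hyps[OF dq q0 True less.prems(3)] by blast
    next
      case False
      then show ?thesis using eq less.prems(2) by metis
    qed
  qed
qed

lemma annihilating_poly:
  fixes M :: "complex^'m^'m" and v0 :: "complex^'m"
  shows "\<exists>p. p \<noteq> 0 \<and> pm M p *v v0 = 0"
proof -
  define x where "x k = mp M k *v v0" for k
  define N where "N = vec.dim (UNIV :: (complex^'m) set)"
  show ?thesis
  proof (cases "inj_on x {..N}")
    case False
    then obtain i j where ij: "i \<noteq> j" "x i = x j" unfolding inj_on_def by blast
    define p where "p = monom (1::complex) i - monom 1 j"
    have "coeff p i = 1" using ij by (simp add: p_def coeff_monom)
    then have "p \<noteq> 0" by auto
    moreover have "pm M p *v v0 = 0"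
      using ij by (simp add: p_def pm_diff pm_monom matrix_vector_mult_diff_rdistrib
          matrix_vector_mul_assoc[symmetric] x_def)
    ultimately show ?thesis by blast
  next
    case True
    define S where "S = x ` {..N}"
    have cS: "card S = N + 1" using True by (simp add: S_def card_image)
    have fS: "finite S" by (simp add: S_def)
    have "vec.dependent S"
    proof (rule ccontr)
      assume "\<not> vec.dependent S"
      then have "card S \<le> vec.dim S" using vec.independent_bound_general by blast
      also have "\<dots> \<le> N" unfolding N_def by (rule vec.dim_subset) simp
      finally show False using cS by simp
    qed
    then obtain u where u: "\<exists>v\<in>S. u v \<noteq> 0" "(\<Sum>v\<in>S. u v *s v) = 0"
      using vec.dependent_finite[OF fS] by blast
    from u(1) obtain k0 where k0: "k0 \<le> N" "u (x k0) \<noteq> 0" unfolding S_def by auto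
    define p where "p = (\<Sum>k\<le>N. monom (u (x k)) k)"
    have "coeff p k0 = (\<Sum>k\<le>N. if k = k0 then u (x k) else 0)"
      by (simp add: p_def coeff_sum coeff_monom)
    also have "\<dots> = u (x k0)" using k0 by simp
    finally have "p \<noteq> 0" using k0 by auto
    moreover have "pm M p *v v0 = (\<Sum>k\<le>N. u (x k) *s x k)"
      by (simp add: p_def pm_sum pm_monom sum_mv matrix_vector_mul_assoc[symmetric] mat_mv x_def)
    moreover have "(\<Sum>k\<le>N. u (x k) *s x k) = (\<Sum>v\<in>S. u v *s v)"
      unfolding S_def using sum.reindex[OF True, of "\<lambda>v. u v *s v"] by simp
    ultimately show ?thesis using u(2) by metis
  qed
qed

lemma eigen_exists:
  fixes M :: "complex^'m^'m"
  shows "\<exists>\<mu> w. w \<noteq> 0 \<and> (M - mat \<mu>) *v w = 0"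
proof -
  have v0: "(\<chi> i. (1::complex)) \<noteq> (0::complex^'m)" by (simp add: vec_eq_iff)
  obtain p where "p \<noteq> 0" "pm M p *v (\<chi> i. (1::complex)) = 0" using annihilating_poly by blast
  then show ?thesis using root_descent v0 by blast
qed



definition GE :: "complex^'m^'m \<Rightarrow> complex \<Rightarrow> (complex^'m) set" where
  "GE M \<mu> = {v. \<exists>k. mp (M - mat \<mu>) k *v v = 0}"

lemma mp_add: "mp N (a + b) = mp N a ** mp N b"
  by (induction a) (simp_all add: matrix_mul_assoc)

lemma GE_sub: "csubspace (GE M \<mu>)"
proof -
  have z: "0 \<in> GE M \<mu>" unfolding GE_def by (auto intro: exI[of _ 0])
  have a: "x + y \<in> GE M \<mu>" if "x \<in> GE M \<mu>" "y \<in> GE M \<mu>" for x y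
  proof -
    from that(1) obtain k1 where h1: "mp (M - mat \<mu>) k1 *v x = 0" unfolding GE_def by blast
    from that(2) obtain k2 where h2: "mp (M - mat \<mu>) k2 *v y = 0" unfolding GE_def by blast
    note h = h1 h2
    have "mp (M - mat \<mu>) (k2 + k1) *v x = 0"
      by (simp only: mp_add matrix_vector_mul_assoc[symmetric] h matrix_vector_mult_0_right)
    moreover have "mp (M - mat \<mu>) (k2 + k1) *v y = 0"
      by (simp only: add.commute[of k2] mp_add matrix_vector_mul_assoc[symmetric] h matrix_vector_mult_0_right)
    ultimately have "mp (M - mat \<mu>) (k2 + k1) *v (x + y) = 0" by (simp add: matrix_vector_right_distrib)
    then show ?thesis unfolding GE_def by blast
  qed
  have s: "c *s x \<in> GE M \<mu>" if "x \<in> GE M \<mu>" for x c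
    using that unfolding GE_def by (auto simp: mv_scale)
  show ?thesis unfolding csubspace_def using z a s by blast
qed

lemma mp_intertwine: "A ** R = R ** B \<Longrightarrow> mp A k ** R = R ** mp B k"
  by (induction k) (simp_all, metis matrix_mul_assoc)

lemma GE_shift:
  fixes M R :: "complex^'m^'m"
  assumes "M ** R = R ** (M + mat \<delta>)" and v: "v \<in> GE M \<mu>"
  shows "R *v v \<in> GE M (\<mu> + \<delta>)"
proof -
  have "(M - mat (\<mu> + \<delta>)) ** R = R ** (M - mat \<mu>)"
  proof -
    have "(M - mat (\<mu> + \<delta>)) ** R = R ** (M + mat \<delta>) - R ** mat (\<mu> + \<delta>)"
      by (simp add: mm_diff_r assms(1) mat_comm)
    also have "\<dots> = R ** (M + mat \<delta> - mat (\<mu> + \<delta>))" by (simp add: mm_diff_l)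
    also have "M + mat \<delta> - mat (\<mu> + \<delta>) = M - mat \<mu>"
      by (simp add: mat_def vec_eq_iff)
    finally show ?thesis .
  qed
  then have I: "mp (M - mat (\<mu> + \<delta>)) k ** R = R ** mp (M - mat \<mu>) k" for k
    by (rule mp_intertwine)
  from v obtain k where "mp (M - mat \<mu>) k *v v = 0" unfolding GE_def by auto
  then have "mp (M - mat (\<mu> + \<delta>)) k *v (R *v v) = 0"
    by (simp add: matrix_vector_mul_assoc I) (metis matrix_vector_mul_assoc matrix_vector_mult_0_right)
  then show ?thesis unfolding GE_def by auto
qed

lemma GE_comm:
  fixes M T :: "complex^'m^'m"
  assumes "M ** T = T ** M" and "v \<in> GE M \<mu>"
  shows "T *v v \<in> GE M \<mu>"
  using GE_shift[of M T 0 v \<mu>] assms by simp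

lemma mp_eig: "(D::complex^'m^'m) *v u = d *s u \<Longrightarrow> mp D b *v u = d ^ b *s u"
proof (induction b)
  case 0 then show ?case by simp
next
  case (Suc b)
  have "mp D (Suc b) *v u = D *v (mp D b *v u)" by (simp add: matrix_vector_mul_assoc)
  also have "\<dots> = d ^ b *s (d *s u)" using Suc by (simp add: mv_scale)
  finally show ?case by (simp add: vector_smult_assoc mult.commute)
qed

lemma GE_disj:
  fixes M :: "complex^'m^'m"
  assumes "w \<in> GE M \<mu>" "w \<in> GE M \<nu>" "\<mu> \<noteq> \<nu>"
  shows "w = 0"
proof -
  define N where "N = M - mat \<mu>"
  define D where "D = M - mat \<nu>"
  define d where "d = \<mu> - \<nu>"
  have d0: "d \<noteq> 0" using assms(3) by (simp add: d_def)
  have DN: "D = N + mat d" by (simp add: N_def D_def d_def mat_def vec_eq_iff)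
  have ND: "N ** D = D ** N" by (simp add: DN matrix_add_ldistrib mm_add_r mat_comm)
  have C: "mp D b ** mp N a = mp N a ** mp D b" for a b
  proof -
    have "N ** mp D b = mp D b ** N" using mp_comm[OF ND[symmetric]] by simp
    then show ?thesis using mp_comm[of N "mp D b" a] by simp
  qed
  obtain b where b: "mp D b *v w = 0" using assms(2) by (auto simp: GE_def D_def)
  have "mp N a *v w = 0 \<Longrightarrow> w = 0" for a
  proof (induction a)
    case 0 then show ?case by simp
  next
    case (Suc a)
    define u where "u = mp N a *v w"
    have Nu: "N *v u = 0" using Suc.prems by (simp add: u_def matrix_vector_mul_assoc)
    have "D *v u = d *s u" by (simp add: DN matrix_vector_mult_add_rdistrib Nu mat_mv)
    then have "mp D b *v u = d ^ b *s u" by (rule mp_eig)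
    moreover have "mp D b *v u = 0"
      by (simp add: u_def matrix_vector_mul_assoc C) (metis b matrix_vector_mul_assoc matrix_vector_mult_0_right)
    ultimately have "u = 0" using d0 smult_zero_vec[of "d ^ b" u] by simp
    then show ?case using Suc.IH u_def by simp
  qed
  moreover obtain a where "mp N a *v w = 0" using assms(1) by (auto simp: GE_def N_def)
  ultimately show ?thesis by blast
qed

lemma GE_indep:
  fixes M :: "complex^'m^'m"
  assumes "finite S"
  shows "(\<forall>i\<in>S. F i \<in> GE M (\<mu>0 + of_int i)) \<Longrightarrow> (\<Sum>i\<in>S. F i) = 0 \<Longrightarrow> \<forall>i\<in>S. F i = 0"
  using assms
proof (induction S arbitrary: F rule: finite_induct)
  case empty then show ?case by simp
next
  case (insert j S)
  define \<mu> where "\<mu> = \<mu>0 + of_int j"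
  obtain k where k: "mp (M - mat \<mu>) k *v F j = 0"
    using insert.prems(1) by (auto simp: GE_def \<mu>_def)
  define T where "T = mp (M - mat \<mu>) k"
  have TM: "M ** T = T ** M"
  proof -
    have "(M - mat \<mu>) ** M = M ** (M - mat \<mu>)" by (simp add: mm_diff_l mm_diff_r mat_comm)
    then show ?thesis unfolding T_def using mp_comm by metis
  qed
  have "F j + (\<Sum>i\<in>S. F i) = 0" using insert.prems(2) insert.hyps by simp
  then have sumS: "(\<Sum>i\<in>S. F i) = - F j" by (metis minus_unique)
  have "(\<Sum>i\<in>S. T *v F i) = 0"
  proof -
    have "(\<Sum>i\<in>S. T *v F i) = T *v (- F j)" by (simp only: mv_sum[symmetric] sumS)
    also have "\<dots> = - (T *v F j)" by (metis diff_0 matrix_vector_mult_diff_distrib matrix_vector_mult_0_right)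
    also have "\<dots> = 0" using k by (simp add: T_def)
    finally show ?thesis .
  qed
  moreover have "\<forall>i\<in>S. T *v F i \<in> GE M (\<mu>0 + of_int i)"
    using insert.prems(1) GE_comm[OF TM] by auto
  ultimately have T0: "\<forall>i\<in>S. T *v F i = 0" using insert.IH[of "\<lambda>i. T *v F i"] by blast
  have FS: "\<forall>i\<in>S. F i = 0"
  proof
    fix i assume i: "i \<in> S"
    then have "i \<noteq> j" using insert.hyps by auto
    have "F i \<in> GE M \<mu>" using T0 i by (auto simp: GE_def T_def)
    moreover have "F i \<in> GE M (\<mu>0 + of_int i)" using insert.prems(1) i by auto
    moreover have "\<mu> \<noteq> \<mu>0 + of_int i" using \<open>i \<noteq> j\<close> by (simp add: \<mu>_def)
    ultimately show "F i = 0" using GE_disj by blast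
  qed
  then have "F j = 0" using sumS by simp
  with FS show ?case by simp
qed



definition SS :: "complex^'m^'m \<Rightarrow> complex \<Rightarrow> int set \<Rightarrow> (complex^'m) set" where
  "SS M \<mu>0 I = {v. \<exists>S F. finite S \<and> S \<subseteq> I \<and> (\<forall>i\<in>S. F i \<in> GE M (\<mu>0 + of_int i)) \<and> v = (\<Sum>i\<in>S. F i)}"

lemma GE_zero: "0 \<in> GE M \<mu>" using GE_sub unfolding csubspace_def by blast
lemma GE_add: "x \<in> GE M \<mu> \<Longrightarrow> y \<in> GE M \<mu> \<Longrightarrow> x + y \<in> GE M \<mu>" using GE_sub unfolding csubspace_def by blast
lemma GE_scale: "x \<in> GE M \<mu> \<Longrightarrow> c *s x \<in> GE M \<mu>" using GE_sub unfolding csubspace_def by blast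

lemma SS_sub: "csubspace (SS M \<mu>0 I)"
proof -
  have z: "0 \<in> SS M \<mu>0 I" unfolding SS_def by (rule CollectI, rule exI[of _ "{}"]) auto
  have a: "x + y \<in> SS M \<mu>0 I" if "x \<in> SS M \<mu>0 I" "y \<in> SS M \<mu>0 I" for x y
  proof -
    from that(1) obtain S1 F1 where 1: "finite S1" "S1 \<subseteq> I" "\<forall>i\<in>S1. F1 i \<in> GE M (\<mu>0 + of_int i)" "x = (\<Sum>i\<in>S1. F1 i)"
      unfolding SS_def by blast
    from that(2) obtain S2 F2 where 2: "finite S2" "S2 \<subseteq> I" "\<forall>i\<in>S2. F2 i \<in> GE M (\<mu>0 + of_int i)" "y = (\<Sum>i\<in>S2. F2 i)"
      unfolding SS_def by blast
    define G1 where "G1 i = (if i \<in> S1 then F1 i else 0)" for i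
    define G2 where "G2 i = (if i \<in> S2 then F2 i else 0)" for i
    have "x = (\<Sum>i\<in>S1 \<union> S2. G1 i)"
      unfolding 1(4) G1_def using 1(1) 2(1) by (simp add: sum.If_cases Int_absorb1)
    moreover have "y = (\<Sum>i\<in>S1 \<union> S2. G2 i)"
      unfolding 2(4) G2_def using 1(1) 2(1) by (simp add: sum.If_cases Int_absorb1)
    ultimately have "x + y = (\<Sum>i\<in>S1 \<union> S2. G1 i + G2 i)" by (simp add: sum.distrib)
    moreover have "\<forall>i\<in>S1 \<union> S2. G1 i + G2 i \<in> GE M (\<mu>0 + of_int i)"
    proof
      fix i assume "i \<in> S1 \<union> S2"
      have "G1 i \<in> GE M (\<mu>0 + of_int i)" using 1(3) GE_zero[of M] by (cases "i \<in> S1") (simp_all add: G1_def)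
      moreover have "G2 i \<in> GE M (\<mu>0 + of_int i)" using 2(3) GE_zero[of M] by (cases "i \<in> S2") (simp_all add: G2_def)
      ultimately show "G1 i + G2 i \<in> GE M (\<mu>0 + of_int i)" by (rule GE_add)
    qed
    moreover have "finite (S1 \<union> S2)" "S1 \<union> S2 \<subseteq> I" using 1(1,2) 2(1,2) by auto
    ultimately show ?thesis unfolding SS_def by (intro CollectI exI[of _ "S1 \<union> S2"] exI[of _ "\<lambda>i. G1 i + G2 i"]) auto
  qed
  have s: "c *s x \<in> SS M \<mu>0 I" if "x \<in> SS M \<mu>0 I" for x c
  proof -
    from that obtain S F where 1: "finite S" "S \<subseteq> I" "\<forall>i\<in>S. F i \<in> GE M (\<mu>0 + of_int i)" "x = (\<Sum>i\<in>S. F i)"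
      unfolding SS_def by blast
    have "c *s x = (\<Sum>i\<in>S. c *s F i)" by (simp add: 1(4) smult_sum)
    moreover have "\<forall>i\<in>S. c *s F i \<in> GE M (\<mu>0 + of_int i)" using 1(3) GE_scale by blast
    ultimately show ?thesis unfolding SS_def using 1(1,2) by (intro CollectI exI[of _ S] exI[of _ "\<lambda>i. c *s F i"]) auto
  qed
  show ?thesis unfolding csubspace_def using z a s by blast
qed

lemma SS_shift:
  fixes M R :: "complex^'m^'m"
  assumes MR: "M ** R = R ** (M + mat (of_int \<delta>))" and IJ: "\<And>i. i \<in> I \<Longrightarrow> i + \<delta> \<in> J"
    and v: "v \<in> SS M \<mu>0 I"
  shows "R *v v \<in> SS M \<mu>0 J"
proof -
  from v obtain S F where 1: "finite S" "S \<subseteq> I" "\<forall>i\<in>S. F i \<in> GE M (\<mu>0 + of_int i)" "v = (\<Sum>i\<in>S. F i)"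
    unfolding SS_def by blast
  define S' where "S' = (\<lambda>i. i + \<delta>) ` S"
  define F' where "F' i = R *v F (i - \<delta>)" for i
  have inj: "inj_on (\<lambda>i. i + \<delta>) S" by (auto simp: inj_on_def)
  have "R *v v = (\<Sum>i\<in>S. R *v F i)" by (simp add: 1(4) mv_sum)
  also have "\<dots> = (\<Sum>i\<in>S'. F' i)" unfolding S'_def F'_def using sum.reindex[OF inj, of F'] by (simp add: F'_def)
  finally have eq: "R *v v = (\<Sum>i\<in>S'. F' i)" .
  have "\<forall>i\<in>S'. F' i \<in> GE M (\<mu>0 + of_int i)"
  proof
    fix i assume "i \<in> S'"
    then obtain j where j: "j \<in> S" "i = j + \<delta>" by (auto simp: S'_def)
    have "R *v F j \<in> GE M ((\<mu>0 + of_int j) + of_int \<delta>)" using GE_shift[OF MR] 1(3) j(1) by blast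
    then show "F' i \<in> GE M (\<mu>0 + of_int i)" using j by (simp add: F'_def add.assoc)
  qed
  moreover have "finite S'" "S' \<subseteq> J" using 1(1,2) IJ by (auto simp: S'_def)
  ultimately show ?thesis unfolding SS_def using eq by (intro CollectI exI[of _ S'] exI[of _ F']) auto
qed

lemma GE_in_SS: "0 \<in> I \<Longrightarrow> v \<in> GE M \<mu>0 \<Longrightarrow> v \<in> SS M \<mu>0 I"
  unfolding SS_def by (rule CollectI, rule exI[of _ "{0}"], rule exI[of _ "\<lambda>_. v"]) auto

lemma SS_split:
  assumes "v \<in> SS M \<mu>0 UNIV"
  shows "\<exists>a\<in>SS M \<mu>0 {i. even i}. \<exists>b\<in>SS M \<mu>0 {i. odd i}. v = a + b"
proof -
  from assms obtain S F where 1: "finite S" "\<forall>i\<in>S. F i \<in> GE M (\<mu>0 + of_int i)" "v = (\<Sum>i\<in>S. F i)"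
    unfolding SS_def by blast
  define a where "a = (\<Sum>i\<in>{i\<in>S. even i}. F i)"
  define b where "b = (\<Sum>i\<in>{i\<in>S. odd i}. F i)"
  have Su: "S = {i\<in>S. even i} \<union> {i\<in>S. odd i}" by auto
  have "v = a + b" unfolding a_def b_def 1(3) using 1(1)
    by (subst Su, subst sum.union_disjoint) auto
  moreover have "a \<in> SS M \<mu>0 {i. even i}" unfolding SS_def a_def using 1(1,2)
    by (intro CollectI exI[of _ "{i\<in>S. even i}"] exI[of _ F]) auto
  moreover have "b \<in> SS M \<mu>0 {i. odd i}" unfolding SS_def b_def using 1(1,2)
    by (intro CollectI exI[of _ "{i\<in>S. odd i}"] exI[of _ F]) auto
  ultimately show ?thesis by blast
qed

lemma SS_disj:
  assumes "v \<in> SS M \<mu>0 I" "v \<in> SS M \<mu>0 J" "I \<inter> J = {}"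
  shows "v = 0"
proof -
  from assms(1) obtain S1 F1 where 1: "finite S1" "S1 \<subseteq> I" "\<forall>i\<in>S1. F1 i \<in> GE M (\<mu>0 + of_int i)" "v = (\<Sum>i\<in>S1. F1 i)"
    unfolding SS_def by blast
  from assms(2) obtain S2 F2 where 2: "finite S2" "S2 \<subseteq> J" "\<forall>i\<in>S2. F2 i \<in> GE M (\<mu>0 + of_int i)" "v = (\<Sum>i\<in>S2. F2 i)"
    unfolding SS_def by blast
  have dj: "S1 \<inter> S2 = {}" using 1(2) 2(2) assms(3) by blast
  define G where "G i = (if i \<in> S1 then F1 i else - F2 i)" for i
  have "(\<Sum>i\<in>S1 \<union> S2. G i) = (\<Sum>i\<in>S1. G i) + (\<Sum>i\<in>S2. G i)"
    using 1(1) 2(1) dj by (simp add: sum.union_disjoint)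
  also have "(\<Sum>i\<in>S1. G i) = v" unfolding 1(4) G_def by simp
  also have "(\<Sum>i\<in>S2. G i) = (\<Sum>i\<in>S2. - F2 i)" unfolding G_def using dj by (intro sum.cong) auto
  also have "\<dots> = - v" unfolding 2(4) by (simp add: sum_negf)
  finally have "(\<Sum>i\<in>S1 \<union> S2. G i) = 0" by simp
  moreover have "\<forall>i\<in>S1 \<union> S2. G i \<in> GE M (\<mu>0 + of_int i)"
    using 1(3) 2(3) GE_scale[of _ M _ "-1"] by (auto simp: G_def)
  ultimately have "\<forall>i\<in>S1 \<union> S2. G i = 0" using GE_indep[of "S1 \<union> S2" G M \<mu>0] 1(1) 2(1) by blast
  then have "\<forall>i\<in>S1. F1 i = 0"
  proof (intro ballI)
    fix i assume "\<forall>i\<in>S1 \<union> S2. G i = 0" "i \<in> S1"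
    then have "G i = 0" by blast
    then show "F1 i = 0" using \<open>i \<in> S1\<close> by (simp add: G_def)
  qed
  then show ?thesis using 1(4) by simp
qed



lemma assoc_PP: "(P::complex^'n^'n) ** P = P \<Longrightarrow> Y ** P ** P = Y ** P"
  by (metis matrix_mul_assoc)

lemmas mm_simps = matrix_mul_assoc matrix_add_ldistrib mm_add_r mm_diff_l mm_diff_r

lemma P_brackets:
  fixes P X :: "complex^'n^'n"
  assumes PP: "P ** P = P"
  defines "Xp \<equiv> P ** X - P ** X ** P"
  defines "Xm \<equiv> X ** P - P ** X ** P"
  shows "P ** Xp - Xp ** P = Xp"
    and "P ** Xm - Xm ** P = - Xm"
  by (simp_all add: Xp_def Xm_def mm_simps PP assoc_PP[OF PP] algebra_simps)

lemma P_bracket0: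
  fixes P X :: "complex^'n^'n"
  assumes PP: "P ** P = P"
  defines "Xp \<equiv> P ** X - P ** X ** P"
  defines "Xm \<equiv> X ** P - P ** X ** P"
  shows "P ** (X - Xp - Xm) - (X - Xp - Xm) ** P = 0"
proof -
  have "P ** (X - Xp - Xm) - (X - Xp - Xm) ** P = (P ** X - X ** P) - (P ** Xp - Xp ** P) - (P ** Xm - Xm ** P)"
    by (simp add: mm_diff_l mm_diff_r matrix_add_ldistrib mm_add_r algebra_simps)
  also have "\<dots> = (P ** X - X ** P) - Xp + Xm"
    using P_brackets[OF PP, of X] by (simp add: Xp_def Xm_def)
  also have "\<dots> = 0" by (simp add: Xp_def Xm_def algebra_simps)
  finally show ?thesis .
qed

lemma P_traces:
  fixes P X :: "complex^'n^'n"
  assumes PP: "P ** P = P" and tX: "trace X = 0"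
  shows "trace (P ** X - P ** X ** P) = 0" "trace (X ** P - P ** X ** P) = 0"
    "trace (X - (P ** X - P ** X ** P) - (X ** P - P ** X ** P)) = 0"
proof -
  have 1: "trace (P ** X ** P) = trace (P ** X)"
    by (metis PP matrix_mul_assoc trace_mul_sym)
  have 2: "trace (X ** P) = trace (P ** X)" by (rule trace_mul_sym)
  show "trace (P ** X - P ** X ** P) = 0" "trace (X ** P - P ** X ** P) = 0"
    "trace (X - (P ** X - P ** X ** P) - (X ** P - P ** X ** P)) = 0"
    by (simp_all only: trace_sub 1 2 tX, simp_all)
qed

lemma P_L0:
  fixes P X :: "complex^'n^'n"
  assumes PP: "P ** P = P" and "P ** X = X ** P"
  shows "P ** X - P ** X ** P = 0" "X ** P - P ** X ** P = 0"
  using assms by (metis matrix_mul_assoc right_minus_eq)+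

lemma P_L1:
  fixes P X :: "complex^'n^'n"
  assumes PP: "P ** P = P" and L: "P ** X + X ** P = X"
  shows "X - (P ** X - P ** X ** P) - (X ** P - P ** X ** P) = 0"
proof -
  have "P ** X ** P = P ** (X - P ** X)"
    by (metis L add_diff_cancel_left' matrix_mul_assoc)
  also have "\<dots> = 0" using PP by (simp add: mm_diff_l matrix_mul_assoc)
  finally have "P ** X ** P = 0" .
  then show ?thesis using L by (simp add: algebra_simps)
qed

lemma comm_scalar:
  fixes C :: "complex^'n^'n"
  assumes comm: "\<forall>X\<in>sl. C ** X = X ** C"
  shows "\<exists>l. C = mat l"
proof -
  define E where "E i j = (\<chi> a b. if a = i \<and> b = j then 1 else (0::complex))" for i j :: 'n
  have Etr: "i \<noteq> j \<Longrightarrow> E i j \<in> sl" for i j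
    unfolding sl_def trace_def E_def by (auto intro!: sum.neutral)
  have L: "(C ** E i j)$a$b = (if b = j then C$a$i else 0)" for i j a b
  proof -
    have "(C ** E i j)$a$b = (\<Sum>k\<in>UNIV. C$a$k * (if k = i \<and> b = j then 1 else 0))"
      unfolding matrix_matrix_mult_def E_def by simp
    also have "\<dots> = (\<Sum>k\<in>UNIV. if k = i then (if b = j then C$a$k else 0) else 0)"
      by (rule sum.cong) auto
    finally have "(C ** E i j)$a$b = (\<Sum>k\<in>UNIV. if k = i then (if b = j then C$a$k else 0) else 0)" .
    then show ?thesis by simp
  qed
  have R: "(E i j ** C)$a$b = (if a = i then C$j$b else 0)" for i j a b
  proof -
    have "(E i j ** C)$a$b = (\<Sum>k\<in>UNIV. (if a = i \<and> k = j then 1 else 0) * C$k$b)"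
      unfolding matrix_matrix_mult_def E_def by simp
    also have "\<dots> = (\<Sum>k\<in>UNIV. if k = j then (if a = i then C$k$b else 0) else 0)"
      by (rule sum.cong) auto
    finally have "(E i j ** C)$a$b = (\<Sum>k\<in>UNIV. if k = j then (if a = i then C$k$b else 0) else 0)" .
    then show ?thesis by simp
  qed
  have off: "C$a$i = 0" if "a \<noteq> i" for a i
  proof -
    have "(C ** E i a)$a$a = (E i a ** C)$a$a" using comm Etr[of i a] that by simp
    then show ?thesis using that by (simp add: L R)
  qed
  have diag: "C$i$i = C$j$j" if "i \<noteq> j" for i j
  proof -
    have "(C ** E i j)$i$j = (E i j ** C)$i$j" using comm Etr[of i j] that by simp
    then show ?thesis by (simp add: L R)
  qed
  define l where "l = C$undefined$undefined"
  have "C$i$j = mat l $i$j" for i j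
  proof (cases "i = j")
    case True
    then show ?thesis using diag[of i undefined] by (cases "i = undefined") (simp_all add: mat_def l_def)
  next
    case False
    then show ?thesis using off[of i j] by (simp add: mat_def)
  qed
  then have "C = mat l" by (simp add: vec_eq_iff)
  then show ?thesis by blast
qed



lemma mm_mat_r: "(X::complex^'n^'n) ** mat c = mat c ** X" by (simp add: mat_comm)
lemma mat_mat_assoc: "mat c ** (mat d ** (X::complex^'n^'n)) = mat (c * d) ** X"
  by (simp add: matrix_mul_assoc mat_mm)
lemma mat_add_fact: "mat c ** (X::complex^'n^'n) + mat c ** Y = mat c ** (X + Y)"
  by (simp add: matrix_add_ldistrib)

lemma P_construct:
  fixes A Ainv :: "complex^'n^'n" and g :: "complex^'n^'n \<Rightarrow> complex^'n^'n"
  assumes inv1: "A ** Ainv = mat 1" and inv2: "Ainv ** A = mat 1"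
    and g_def: "\<And>X. g X = A ** X ** Ainv"
    and g_inv: "\<forall>X\<in>sl. g (g X) = X"
  shows "\<exists>P. P ** P = P \<and> (\<forall>X\<in>sl. g X = X \<longrightarrow> P ** X = X ** P) \<and>
              (\<forall>X\<in>sl. g X = - X \<longrightarrow> P ** X + X ** P = X)"
proof -
  have c2: "Y ** Ainv ** A = Y" for Y by (metis inv2 matrix_mul_assoc matrix_mul_rid)
  have "\<forall>X\<in>(sl::(complex^'n^'n) set). (A ** A) ** X = X ** (A ** A)"
  proof
    fix X :: "complex^'n^'n" assume "X \<in> sl"
    then have X: "X = A ** A ** X ** Ainv ** Ainv" using g_inv by (simp add: g_def matrix_mul_assoc)
    have "X ** (A ** A) = A ** A ** X ** Ainv ** Ainv ** A ** A"
      by (subst X) (simp add: matrix_mul_assoc)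
    also have "\<dots> = A ** A ** X" by (simp add: c2)
    finally show "(A ** A) ** X = X ** (A ** A)" by simp
  qed
  then obtain l where AA: "A ** A = mat l" using comm_scalar by blast
  have l0: "l \<noteq> 0"
  proof
    assume "l = 0"
    then have "A ** A = 0" using AA by simp
    then have "Ainv ** Ainv ** A ** A = 0" by (simp add: matrix_mul_assoc[symmetric])
    moreover have "Ainv ** Ainv ** A ** A = mat 1" by (simp add: c2 inv2)
    ultimately have "(mat 1 :: complex^'n^'n) = 0" by simp
    then have "(mat 1 :: complex^'n^'n) $ undefined $ undefined = 0" by simp
    then show False by (simp add: mat_def)
  qed
  define s where "s = csqrt l"
  have ss: "s * s = l" using power2_csqrt[of l] by (simp add: s_def power2_eq_square)
  then have s0: "s \<noteq> 0" using l0 by auto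
  define B where "B = mat (1/s) ** A"
  have BB: "B ** B = mat 1"
  proof -
    have "B ** B = mat (1/s) ** (A ** (mat (1/s) ** A))" by (simp add: B_def matrix_mul_assoc)
    also have "\<dots> = mat (1/s * (1/s)) ** (A ** A)" by (simp only: mat_comm2[of A] mat_mat_assoc)
    also have "\<dots> = mat (1/s * (1/s) * l)" by (simp only: AA mat_mm)
    also have "1/s * (1/s) * l = 1" using s0 ss l0 by (simp add: field_simps)
    finally show ?thesis .
  qed
  define P where "P = mat (1/2) ** (mat 1 + B)"
  have PP: "P ** P = P"
  proof -
    have "P ** P = mat (1/2) ** ((mat 1 + B) ** (mat (1/2) ** (mat 1 + B)))" by (simp add: P_def matrix_mul_assoc)
    also have "\<dots> = mat (1/2 * (1/2)) ** ((mat 1 + B) ** (mat 1 + B))" by (simp only: mat_comm2[of "mat 1 + B"] mat_mat_assoc)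
    also have "(mat 1 + B) ** (mat 1 + B) = mat 1 + B + B + mat 1"
      by (simp add: matrix_add_ldistrib mm_add_r BB)
    finally have "P ** P = mat (1/4) ** (mat 1 + B + B + mat 1)" by simp
    also have "\<dots> = P" unfolding P_def by (simp only: mat_mult_l) (simp add: vec_eq_iff mat_def field_simps)
    finally show ?thesis .
  qed
  have PX: "P ** (X::complex^'n^'n) = mat (1/2) ** (X + mat (1/s) ** (A ** X))" for X
    by (simp add: P_def B_def matrix_mul_assoc[symmetric] mm_add_r)
  have XP: "(X::complex^'n^'n) ** P = mat (1/2) ** (X + mat (1/s) ** (X ** A))" for X
  proof -
    have "X ** (mat 1 + B) = X + mat (1/s) ** (X ** A)"
      by (simp only: B_def matrix_add_ldistrib matrix_mul_rid mat_comm2[of X])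
    then show ?thesis by (simp only: P_def mat_comm2[of X])
  qed
  have L0: "P ** X = X ** P" if "X \<in> sl" "g X = X" for X
  proof -
    have "X ** A = A ** X ** Ainv ** A" using that(2) by (simp add: g_def)
    then have "X ** A = A ** X" by (simp add: c2)
    then show ?thesis by (simp add: PX XP)
  qed
  have L1: "P ** X + X ** P = X" if "X \<in> sl" "g X = - X" for X
  proof -
    have "- X ** A = A ** X ** Ainv ** A" using that(2) by (simp add: g_def)
    then have AX: "A ** X = - (X ** A)" by (simp add: c2 mm_neg_l)
    show ?thesis unfolding PX XP AX
      by (simp only: mat_mult_l) (simp add: vec_eq_iff field_simps)
  qed
  show ?thesis using PP L0 L1 by blast
qed



theorem theorem2:
  fixes A Ainv :: "complex^'n^'n"
    and r :: "complex^'n^'n \<Rightarrow> complex^'m^'m"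
    and g :: "complex^'n^'n \<Rightarrow> complex^'n^'n"
  assumes n2: "CARD('n) \<ge> 2"
    and detA: "det A = 1"
    and inv1: "A ** Ainv = mat 1" and inv2: "Ainv ** A = mat 1"
    and g_def: "\<And>X. g X = A ** X ** Ainv"
    and g_nonid: "\<exists>X\<in>sl. g X \<noteq> X"
    and g_inv: "\<forall>X\<in>sl. g (g X) = X"
    and irr: "irreducible_rep r"
  shows "\<exists>V0 V1 :: (complex^'m) set.
           csubspace V0 \<and> csubspace V1 \<and> V0 \<inter> V1 = {0} \<and>
           (\<forall>v. \<exists>a\<in>V0. \<exists>b\<in>V1. v = a + b) \<and>
           (\<forall>X\<in>{X\<in>sl. g X = X}. (\<forall>v\<in>V0. r X *v v \<in> V0) \<and> (\<forall>v\<in>V1. r X *v v \<in> V1)) \<and>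
           (\<forall>X\<in>{X\<in>sl. g X = - X}. (\<forall>v\<in>V0. r X *v v \<in> V1) \<and> (\<forall>v\<in>V1. r X *v v \<in> V0))"
proof -
  obtain P where PP: "P ** P = P" and L0: "\<forall>X\<in>sl. g X = X \<longrightarrow> P ** X = X ** P"
    and L1: "\<forall>X\<in>sl. g X = - X \<longrightarrow> P ** X + X ** P = X"
    using P_construct[OF inv1 inv2 g_def g_inv] by blast
  have rep: "is_rep r" and irrW: "\<And>W. csubspace W \<Longrightarrow> (\<forall>X\<in>sl. \<forall>v\<in>W. r X *v v \<in> W) \<Longrightarrow> W = {0} \<or> W = UNIV"
    using irr unfolding irreducible_rep_def by auto
  have radd: "\<And>X Y. X \<in> sl \<Longrightarrow> Y \<in> sl \<Longrightarrow> r (X + Y) = r X + r Y"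
    and rsc: "\<And>c X. X \<in> sl \<Longrightarrow> r (mscale c X) = mscale c (r X)"
    and rbr: "\<And>X Y. X \<in> sl \<Longrightarrow> Y \<in> sl \<Longrightarrow> r (mbracket X Y) = mbracket (r X) (r Y)"
    using rep unfolding is_rep_def by auto
  have sl0: "(0::complex^'n^'n) \<in> sl" by (simp add: sl_def trace_def)
  have r0: "r 0 = 0" using radd[OF sl0 sl0] by simp
  have sladd: "X \<in> sl \<Longrightarrow> Y \<in> sl \<Longrightarrow> X + Y \<in> sl" for X Y :: "complex^'n^'n"
    by (simp add: sl_def trace_add)
  define c where "c = trace P / of_nat CARD('n)"
  define h where "h = P - mat c"
  have trmat: "trace (mat c :: complex^'n^'n) = c * of_nat CARD('n)" by (simp add: trace_def mat_def)
  have hsl: "h \<in> sl" by (simp add: sl_def h_def trace_sub trmat) (simp add: c_def)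
  have hbr: "mbracket h Y = P ** Y - Y ** P" for Y
    by (simp add: mbracket_def h_def mm_diff_r mm_diff_l mat_comm)
  define M where "M = r h"
  have shiftlem: "M ** r Y = r Y ** (M + mat d)" if Y: "Y \<in> sl" and br: "P ** Y - Y ** P = mscale d Y" for Y d
  proof -
    have e1: "r (mbracket h Y) = mbracket M (r Y)" using rbr[OF hsl Y] by (simp add: M_def)
    have e2: "mbracket h Y = mscale d Y" using hbr br by simp
    have "mbracket M (r Y) = mat d ** r Y" using e1 e2 rsc[OF Y, of d] by (simp add: mscale_eq)
    then have "M ** r Y - r Y ** M = mat d ** r Y" by (simp add: mbracket_def)
    then have "M ** r Y = r Y ** M + mat d ** r Y" by (simp add: algebra_simps)
    then show ?thesis by (simp add: matrix_add_ldistrib mat_comm)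
  qed
  define Xp where "Xp X = P ** X - P ** X ** P" for X
  define Xm where "Xm X = X ** P - P ** X ** P" for X
  define X0 where "X0 X = X - Xp X - Xm X" for X
  have dec: "r X = r (X0 X) + r (Xp X) + r (Xm X) \<and>
      M ** r (X0 X) = r (X0 X) ** (M + mat (of_int 0)) \<and>
      M ** r (Xp X) = r (Xp X) ** (M + mat (of_int 1)) \<and>
      M ** r (Xm X) = r (Xm X) ** (M + mat (of_int (-1)))" if X: "X \<in> sl" for X
  proof -
    have tX: "trace X = 0" using X by (simp add: sl_def)
    have slp: "Xp X \<in> sl" "Xm X \<in> sl" "X0 X \<in> sl"
      using P_traces[OF PP tX] by (simp_all add: sl_def Xp_def Xm_def X0_def)
    have b: "P ** Xp X - Xp X ** P = Xp X" "P ** Xm X - Xm X ** P = - Xm X"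
      "P ** X0 X - X0 X ** P = 0"
      using P_brackets(1,2)[OF PP, of X] P_bracket0[OF PP, of X] by (simp_all add: Xp_def Xm_def X0_def)
    have m1: "mscale 1 Y = Y" for Y :: "complex^'n^'n" by (simp add: mscale_eq)
    have mm1: "mscale (-1) Y = - Y" for Y :: "complex^'n^'n"
      by (simp add: mscale_eq mat_neg[symmetric] mm_neg_l)
    have m0: "mscale 0 Y = 0" for Y :: "complex^'n^'n" by (simp add: mscale_eq)
    have "X = (X0 X + Xp X) + Xm X" by (simp add: X0_def)
    then have "r X = r (X0 X) + r (Xp X) + r (Xm X)"
      using radd[OF sladd[OF slp(3) slp(1)] slp(2)] radd[OF slp(3) slp(1)] by simp
    moreover have "M ** r (X0 X) = r (X0 X) ** (M + mat 0)"
      using shiftlem[OF slp(3), of 0] b(3) m0 by simp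
    moreover have "M ** r (Xp X) = r (Xp X) ** (M + mat 1)"
      using shiftlem[OF slp(1), of 1] b(1) m1 by simp
    moreover have "M ** r (Xm X) = r (Xm X) ** (M + mat (-1))"
      using shiftlem[OF slp(2), of "-1"] b(2) mm1 by simp
    ultimately show ?thesis by simp
  qed
  obtain \<mu>0 w where w: "w \<noteq> 0" "(M - mat \<mu>0) *v w = 0" using eigen_exists by blast
  have wGE: "w \<in> GE M \<mu>0" unfolding GE_def using w(2) by (intro CollectI exI[of _ 1]) simp
  define V0 where "V0 = SS M \<mu>0 {i. even i}"
  define V1 where "V1 = SS M \<mu>0 {i. odd i}"
  define W where "W = SS M \<mu>0 UNIV"
  have Wsub: "csubspace W" unfolding W_def by (rule SS_sub)
  have Winv: "\<forall>X\<in>sl. \<forall>v\<in>W. r X *v v \<in> W"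
  proof (intro ballI)
    fix X :: "complex^'n^'n" and v assume X: "X \<in> sl" and v: "v \<in> W"
    note d = dec[OF X]
    have "r (X0 X) *v v \<in> W" using SS_shift[of M "r (X0 X)" 0 UNIV UNIV v \<mu>0] d v by (simp add: W_def)
    moreover have "r (Xp X) *v v \<in> W" using SS_shift[of M "r (Xp X)" 1 UNIV UNIV v \<mu>0] d v by (simp add: W_def)
    moreover have "r (Xm X) *v v \<in> W" using SS_shift[of M "r (Xm X)" "-1" UNIV UNIV v \<mu>0] d v by (simp add: W_def)
    ultimately show "r X *v v \<in> W" using Wsub d unfolding csubspace_def
      by (simp add: matrix_vector_mult_add_rdistrib)
  qed
  have "w \<in> W" unfolding W_def using GE_in_SS[OF _ wGE] by simp
  then have WU: "W = UNIV" using irrW[OF Wsub Winv] w(1) by auto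
  have V0s: "csubspace V0" "csubspace V1" unfolding V0_def V1_def by (rule SS_sub)+
  have disj: "V0 \<inter> V1 = {0}"
  proof
    show "V0 \<inter> V1 \<subseteq> {0}" using SS_disj[of _ M \<mu>0 "{i. even i}" "{i. odd i}"] by (auto simp: V0_def V1_def)
    show "{0} \<subseteq> V0 \<inter> V1" using V0s unfolding csubspace_def by auto
  qed
  have split: "\<forall>v. \<exists>a\<in>V0. \<exists>b\<in>V1. v = a + b"
    using SS_split[of _ M \<mu>0] WU unfolding V0_def V1_def W_def by blast
  have evn: "\<And>i. i \<in> {i::int. even i} \<Longrightarrow> i + 1 \<in> {i. odd i}" "\<And>i. i \<in> {i::int. even i} \<Longrightarrow> i + -1 \<in> {i. odd i}"
    "\<And>i. i \<in> {i::int. odd i} \<Longrightarrow> i + 1 \<in> {i. even i}" "\<And>i. i \<in> {i::int. odd i} \<Longrightarrow> i + -1 \<in> {i. even i}"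
    by auto
  have G0: "(\<forall>v\<in>V0. r X *v v \<in> V0) \<and> (\<forall>v\<in>V1. r X *v v \<in> V1)" if X: "X \<in> sl" "g X = X" for X
  proof -
    note d = dec[OF X(1)]
    have "Xp X = 0" "Xm X = 0" using P_L0[OF PP] L0 X by (simp_all add: Xp_def Xm_def)
    then have rX: "r X = r (X0 X)" using d r0 by simp
    show ?thesis
      using SS_shift[of M "r (X0 X)" 0 "{i. even i}" "{i. even i}" _ \<mu>0]
        SS_shift[of M "r (X0 X)" 0 "{i. odd i}" "{i. odd i}" _ \<mu>0] d
      by (simp add: rX V0_def V1_def)
  qed
  have G1: "(\<forall>v\<in>V0. r X *v v \<in> V1) \<and> (\<forall>v\<in>V1. r X *v v \<in> V0)" if X: "X \<in> sl" "g X = - X" for X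
  proof -
    note d = dec[OF X(1)]
    have "X0 X = 0" using P_L1[OF PP] L1 X by (simp add: X0_def Xp_def Xm_def)
    then have rX: "r X = r (Xp X) + r (Xm X)" using d r0 by simp
    have a: "r X *v v \<in> V1" if v: "v \<in> V0" for v
    proof -
      have "r (Xp X) *v v \<in> V1" using SS_shift[of M "r (Xp X)" 1 "{i. even i}" "{i. odd i}" v \<mu>0] d v evn
        by (simp add: V0_def V1_def)
      moreover have "r (Xm X) *v v \<in> V1" using SS_shift[of M "r (Xm X)" "-1" "{i. even i}" "{i. odd i}" v \<mu>0] d v evn
        by (simp add: V0_def V1_def)
      ultimately show ?thesis using V0s(2) unfolding csubspace_def by (simp add: rX matrix_vector_mult_add_rdistrib)
    qed
    have b: "r X *v v \<in> V0" if v: "v \<in> V1" for v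
    proof -
      have "r (Xp X) *v v \<in> V0" using SS_shift[of M "r (Xp X)" 1 "{i. odd i}" "{i. even i}" v \<mu>0] d v evn
        by (simp add: V0_def V1_def)
      moreover have "r (Xm X) *v v \<in> V0" using SS_shift[of M "r (Xm X)" "-1" "{i. odd i}" "{i. even i}" v \<mu>0] d v evn
        by (simp add: V0_def V1_def)
      ultimately show ?thesis using V0s(1) unfolding csubspace_def by (simp add: rX matrix_vector_mult_add_rdistrib)
    qed
    show ?thesis using a b by blast
  qed
  show ?thesis
    apply (rule exI[of _ V0], rule exI[of _ V1])
    using V0s disj split G0 G1 by blast
qed

end
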